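(* Let $B$ be a norming region. For the $B$-biased branching Markov chain, a blue individual located at $x\notin B$ produces $n$ children with probability $d^{\mathrm{s.b.}}_x(n)=n\,d_x(n)/m_x$; conditionally on producing $n$ children, the location of the blue child and the locations of the $n-1$ white children are independent, each white child's location has law $p(x,\cdot)$, and the blue child's location $y$ has law $(p^h_{x,y})_{y\in S}$, where $p^h_{x,y}=\mathbf 1_{B^c}(x)\,q_{x,y}h(y)/h(x)$.
   Context: $S$ countable, $p=(p_{x,y})$ a stochastic matrix on $S$, $(d_x)_{x\in S}$ probability distributions on $\mathbb N_0$, $m_x=\sum_m m\,d_x(m)$, $q_{x,y}=m_xp_{x,y}$, $Q=(q_{x,y})$, Green's function $g(x,y)=\sum_{n\ge0}(Q^n)_{x,y}$, assumed finite. For a branching Markov chain started from one individual at $x$ (each individual at $z$ independently has a $d_z$-distributed number of children at independent $p(z,\cdot)$-distributed locations), $\mathcal H_B$ denotes the set of individuals located in $B$ none of whose strict ancestors is located in $B$. A norming region is a finite $B\subset S$ with $\sum_{y\in B}g(x,y)>0$ for all $x$; $h(x)=\mathbb E^x[\#\mathcal H_B]\in(0,\infty)$. One has $h=Qh$ on $B^c$ and $h=1$ on $B$. The $B$-biased branching Markov chain is a two-type branching Markov chain with types white and blue (state space $S\times\{\mathrm{white},\mathrm{blue}\}$): a white individual, and a blue individual located in $B$, reproduce as in the original chain ($d_x$-distributed number of children at independent $p(x,\cdot)$-locations) and all their children are white. A blue individual at $x\notin B$ produces $n\in\mathbb N$ children with (ordered) locations $y_1,\dots,y_n$ with probability $\frac{1}{h(x)}d_x(n)\prod_{k=1}^np_{x,y_k}\sum_{k=1}^nh(y_k)$;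 given this, the $k$-th child is coloured blue with probability $h(y_k)/\sum_{l=1}^nh(y_l)$ and all other children white. *)

theory Defs
  imports "HOL-Analysis.Analysis"
begin

text \<open>State space S is a countable type 'a; p x y = p_{x,y}; d x n = d_x(n).
  Quantities that may a priori be infinite (means, Q-powers, Green function, h)
  are computed in ennreal.\<close>

definition mean :: "('a \<Rightarrow> nat \<Rightarrow> real) \<Rightarrow> 'a \<Rightarrow> ennreal" where
  "mean d x = (\<Sum>\<^sub>\<infinity>n. of_nat n * ennreal (d x n))"

definition qmat :: "('a \<Rightarrow> nat \<Rightarrow> real) \<Rightarrow> ('a \<Rightarrow> 'a \<Rightarrow> real) \<Rightarrow> 'a \<Rightarrow> 'a \<Rightarrow> ennreal" where
  "qmat d p x y = mean d x * ennreal (p x y)"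

fun Qpow :: "('a \<Rightarrow> nat \<Rightarrow> real) \<Rightarrow> ('a \<Rightarrow> 'a \<Rightarrow> real) \<Rightarrow> nat \<Rightarrow> 'a \<Rightarrow> 'a \<Rightarrow> ennreal" where
  "Qpow d p 0 x y = (if x = y then 1 else 0)"
| "Qpow d p (Suc n) x y = (\<Sum>\<^sub>\<infinity>z. qmat d p x z * Qpow d p n z y)"

definition green :: "('a \<Rightarrow> nat \<Rightarrow> real) \<Rightarrow> ('a \<Rightarrow> 'a \<Rightarrow> real) \<Rightarrow> 'a \<Rightarrow> 'a \<Rightarrow> ennreal" where
  "green d p x y = (\<Sum>\<^sub>\<infinity>n. Qpow d p n x y)"

definition norming_region ::
  "('a \<Rightarrow> nat \<Rightarrow> real) \<Rightarrow> ('a \<Rightarrow> 'a \<Rightarrow> real) \<Rightarrow> 'a set \<Rightarrow> bool" where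
  "norming_region d p B \<longleftrightarrow> finite B \<and> (\<forall>x. (\<Sum>y\<in>B. green d p x y) > 0)"

text \<open>Expected number of individuals in H_B at generation n, i.e. the Q-weight of
  paths x = z_0,...,z_n whose first visit to B is at time n (many-to-one formula).\<close>
fun hgen :: "('a \<Rightarrow> nat \<Rightarrow> real) \<Rightarrow> ('a \<Rightarrow> 'a \<Rightarrow> real) \<Rightarrow> 'a set \<Rightarrow> nat \<Rightarrow> 'a \<Rightarrow> ennreal" where
  "hgen d p B 0 x = (if x \<in> B then 1 else 0)"
| "hgen d p B (Suc n) x = (if x \<in> B then 0 else (\<Sum>\<^sub>\<infinity>y. qmat d p x y * hgen d p B n y))"

text \<open>h(x) = E^x[#H_B].\<close>
definition hfun :: "('a \<Rightarrow> nat \<Rightarrow> real) \<Rightarrow> ('a \<Rightarrow> 'a \<Rightarrow> real) \<Rightarrow> 'a set \<Rightarrow> 'a \<Rightarrow> real" where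
  "hfun d p B x = enn2real (\<Sum>\<^sub>\<infinity>n. hgen d p B n x)"

text \<open>Probability that a blue individual at x (not in B) of the B-biased chain has
  exactly the children with ordered locations ys and that the k-th child (0-based)
  is the blue one: (offspring probability) * (colouring probability).\<close>
definition blue_law ::
  "('a \<Rightarrow> nat \<Rightarrow> real) \<Rightarrow> ('a \<Rightarrow> 'a \<Rightarrow> real) \<Rightarrow> 'a set \<Rightarrow> 'a \<Rightarrow> 'a list \<Rightarrow> nat \<Rightarrow> real" where
  "blue_law d p B x ys k =
     (1 / hfun d p B x) * d x (length ys) * (\<Prod>y\<leftarrow>ys. p x y) * (\<Sum>y\<leftarrow>ys. hfun d p B y)
     * (hfun d p B (ys ! k) / (\<Sum>y\<leftarrow>ys. hfun d p B y))"

definition dsb :: "('a \<Rightarrow> nat \<Rightarrow> real) \<Rightarrow> 'a \<Rightarrow> nat \<Rightarrow> real" where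
  "dsb d x n = real n * d x n / enn2real (mean d x)"

definition ph :: "('a \<Rightarrow> nat \<Rightarrow> real) \<Rightarrow> ('a \<Rightarrow> 'a \<Rightarrow> real) \<Rightarrow> 'a set \<Rightarrow> 'a \<Rightarrow> 'a \<Rightarrow> real" where
  "ph d p B x y = (if x \<notin> B then enn2real (qmat d p x y) * hfun d p B y / hfun d p B x else 0)"

end

theory Submission
  imports Defs
begin

lemma enn_term_le_infsum:
  fixes f :: "'b \<Rightarrow> ennreal"
  shows "f a \<le> infsum f UNIV"
proof -
  have "infsum f {a} \<le> infsum f UNIV"
    by (rule infsum_mono_neutral) (auto simp: nonneg_summable_on_complete)
  then show ?thesis by simp
qed

theorem mainTheorem2:
  fixes p :: "'a::countable \<Rightarrow> 'a \<Rightarrow> real" and d :: "'a \<Rightarrow> nat \<Rightarrow> real" and B :: "'a set"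
  assumes p_nonneg: "\<And>x y. p x y \<ge> 0"
    and p_stoch: "\<And>x. (p x has_sum 1) UNIV"
    and d_nonneg: "\<And>x n. d x n \<ge> 0"
    and d_distr: "\<And>x. (d x has_sum 1) UNIV"
    and green_fin: "\<And>x y. green d p x y \<noteq> \<infinity>"
    and norming: "norming_region d p B"
    and xB: "x \<notin> B"
  shows "(\<Sum>k\<le>length ws. blue_law d p B x (take k ws @ y # drop k ws) k)
         = dsb d x (Suc (length ws)) * ph d p B x y * (\<Prod>w\<leftarrow>ws. p x w)"
proof -
  define H where "H = hfun d p B"
  define n where "n = Suc (length ws)"
  define P where "P = (\<Prod>w\<leftarrow>ws. p x w)"
  have Hnn: "\<And>z. H z \<ge> 0" unfolding H_def hfun_def by simp
  define T where "T = (1 / H x) * d x n * (p x y * P) * H y"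
  have blue_eq: "blue_law d p B x (take k ws @ y # drop k ws) k = T" if k: "k \<le> length ws" for k
  proof -
    let ?ys = "take k ws @ y # drop k ws"
    have len: "length ?ys = n" using k by (simp add: n_def)
    have nth: "?ys ! k = y" using k by (simp add: nth_append)
    have pr: "(\<Prod>z\<leftarrow>?ys. p x z) = p x y * P"
    proof -
      have "(\<Prod>z\<leftarrow>?ys. p x z) = (\<Prod>z\<leftarrow>take k ws. p x z) * (p x y * (\<Prod>z\<leftarrow>drop k ws. p x z))"
        by simp
      also have "\<dots> = p x y * ((\<Prod>z\<leftarrow>take k ws. p x z) * (\<Prod>z\<leftarrow>drop k ws. p x z))"
        by (simp add: algebra_simps)
      also have "(\<Prod>z\<leftarrow>take k ws. p x z) * (\<Prod>z\<leftarrow>drop k ws. p x z) = P"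
        unfolding P_def by (metis append_take_drop_id map_append prod_list.append)
      finally show ?thesis .
    qed
    define S where "S = (\<Sum>z\<leftarrow>?ys. H z)"
    have "H y \<le> S" unfolding S_def
      by (rule member_le_sum_list) (auto simp: Hnn)
    hence SH: "S * (H y / S) = H y" using Hnn[of y] by (cases "S = 0") auto
    have "blue_law d p B x ?ys k = (1 / H x) * d x n * (\<Prod>z\<leftarrow>?ys. p x z) * S * (H y / S)"
      unfolding blue_law_def len nth S_def H_def by simp
    also have "\<dots> = (1 / H x) * d x n * (p x y * P) * (S * (H y / S))"
      unfolding pr by (simp only: mult.assoc)
    finally have "blue_law d p B x ?ys k = (1 / H x) * d x n * (p x y * P) * (S * (H y / S))" .
    then show ?thesis unfolding SH T_def .
  qed
  have lhs: "(\<Sum>k\<le>length ws. blue_law d p B x (take k ws @ y # drop k ws) k) = real n * T"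
    by (simp add: blue_eq n_def)
  show ?thesis
  proof (cases "p x y = 0")
    case True
    then show ?thesis unfolding lhs T_def ph_def qmat_def by simp
  next
    case False
    have "Qpow d p 1 x y = qmat d p x y"
    proof -
      have "Qpow d p 1 x y = (\<Sum>\<^sub>\<infinity>z. qmat d p x z * (if z = y then 1 else 0))" by simp
      also have "\<dots> = (\<Sum>\<^sub>\<infinity>z\<in>{y}. qmat d p x z)"
        by (rule infsum_cong_neutral) auto
      finally show ?thesis by simp
    qed
    moreover have "Qpow d p 1 x y \<le> green d p x y" unfolding green_def
      by (rule enn_term_le_infsum)
    ultimately have "qmat d p x y \<noteq> \<infinity>" using green_fin[of x y] by (auto simp: top_unique)
    hence mfin: "mean d x \<noteq> \<infinity>" using False p_nonneg[of x y]
      unfolding qmat_def by (auto simp: ennreal_mult_eq_top_iff)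
    have q: "enn2real (qmat d p x y) = enn2real (mean d x) * p x y"
      unfolding qmat_def by (simp add: enn2real_mult p_nonneg)
    show ?thesis
    proof (cases "enn2real (mean d x) = 0")
      case True
      hence m0: "mean d x = 0" using mfin by (simp add: enn2real_eq_0_iff)
      have "of_nat n * ennreal (d x n) \<le> mean d x" unfolding mean_def
        by (rule enn_term_le_infsum[where f="\<lambda>n. of_nat n * ennreal (d x n)"])
      hence "of_nat n * ennreal (d x n) = 0" using m0 by simp
      hence "d x n = 0" using d_nonneg[of x n] by (simp add: n_def)
      then show ?thesis unfolding lhs T_def n_def dsb_def by simp
    next
      case False
      show ?thesis unfolding lhs T_def dsb_def ph_def q using xB False
        by (cases "hfun d p B x = 0") (simp_all add: H_def n_def P_def field_simps)
    qed
  qed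
qed

end
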